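(* There exists a Heffter array $H(n;k)$ for all $n\equiv 1\pmod 4$ and $k\equiv 1\pmod 4$ with $5\le k<n$.
   Context: A Heffter array $H(n;k)$ is an $n\times n$ array in which some cells are filled with nonzero integers and the others are empty, such that: each row and each column contains exactly $k$ filled cells; the entries of every row and of every column sum to $0$ modulo $2nk+1$; and for each integer $1\le x\le nk$, exactly one of $x$ or $-x$ appears in the array, and it appears exactly once. *)

theory Defs
  imports Main
begin

text \<open>An n x n partially filled array: cell (i,j) with i,j < n is empty (None)
  or holds an integer. Cells outside the range are ignored.\<close>

definition filled_row :: "(nat \<Rightarrow> nat \<Rightarrow> int option) \<Rightarrow> nat \<Rightarrow> nat \<Rightarrow> nat set" where
  "filled_row A n i = {j. j < n \<and> A i j \<noteq> None}"

definition filled_col :: "(nat \<Rightarrow> nat \<Rightarrow> int option) \<Rightarrow> nat \<Rightarrow> nat \<Rightarrow> nat set" where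
  "filled_col A n j = {i. i < n \<and> A i j \<noteq> None}"

definition heffter :: "nat \<Rightarrow> nat \<Rightarrow> (nat \<Rightarrow> nat \<Rightarrow> int option) \<Rightarrow> bool" where
  "heffter n k A \<longleftrightarrow>
     (\<forall>i<n. \<forall>j<n. A i j \<noteq> Some 0) \<and>
     (\<forall>i<n. card (filled_row A n i) = k) \<and>
     (\<forall>j<n. card (filled_col A n j) = k) \<and>
     (\<forall>i<n. (\<Sum>j\<in>filled_row A n i. the (A i j)) mod (2 * int n * int k + 1) = 0) \<and>
     (\<forall>j<n. (\<Sum>i\<in>filled_col A n j. the (A i j)) mod (2 * int n * int k + 1) = 0) \<and>
     (\<forall>i<n. \<forall>j<n. \<forall>v. A i j = Some v \<longrightarrow> 1 \<le> \<bar>v\<bar> \<and> \<bar>v\<bar> \<le> int (n * k)) \<and>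
     (\<forall>x::int. 1 \<le> x \<and> x \<le> int (n * k) \<longrightarrow>
        (\<exists>!p. p \<in> {0..<n} \<times> {0..<n} \<and>
               (A (fst p) (snd p) = Some x \<or> A (fst p) (snd p) = Some (-x))))"

end

theory Submission
  imports Defs
begin

definition hv :: "nat \<Rightarrow> int" where "hv n = (int n - 1) div 2"
definition uu :: "nat \<Rightarrow> int \<Rightarrow> int" where "uu n y = ((hv n + 1) * y) mod int n"
definition vv :: "nat \<Rightarrow> int \<Rightarrow> int" where "vv n y = (- y) mod int n"

lemma hv_eq: assumes "odd n" shows "2 * hv n + 1 = int n"
proof -
  obtain m where "n = 2*m+1" using assms oddE by blast
  thus ?thesis by (simp add: hv_def)
qed

lemma uu_mod: "uu n (y mod int n) = uu n y"
  unfolding uu_def by (simp add: mod_mult_right_eq)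

lemma vv_mod: "vv n (y mod int n) = vv n y"
  unfolding vv_def by (metis mod_minus_eq)

lemma uu_range: "n > 0 \<Longrightarrow> 0 \<le> uu n y \<and> uu n y < int n"
  unfolding uu_def by simp

lemma vv_range: "n > 0 \<Longrightarrow> 0 \<le> vv n y \<and> vv n y < int n"
  unfolding vv_def by simp

lemma two_uu: assumes "odd n" shows "(2 * uu n y) mod int n = y mod int n"
proof -
  have "(2 * uu n y) mod int n = (2 * ((hv n + 1) * y)) mod int n"
    unfolding uu_def by (simp add: mod_mult_right_eq)
  also have "2 * ((hv n + 1) * y) = y + int n * y"
  proof -
    have "int n = 2 * hv n + 1" using hv_eq[OF assms] by simp
    thus ?thesis by (simp add: algebra_simps)
  qed
  also have "(y + int n * y) mod int n = y mod int n" by simp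
  finally show ?thesis .
qed

lemma uu_plus2: assumes "odd n" shows "uu n (y + 2) = (uu n y + 1) mod int n"
proof -
  have N: "int n = 2 * hv n + 1" using hv_eq[OF assms] by simp
  have "(hv n + 1) * (y + 2) = ((hv n + 1) * y + 1) + int n" by (simp add: N algebra_simps)
  hence "uu n (y + 2) = (((hv n + 1) * y + 1) + int n) mod int n" unfolding uu_def by simp
  also have "\<dots> = ((hv n + 1) * y + 1) mod int n" by simp
  also have "\<dots> = (uu n y + 1) mod int n" unfolding uu_def by (simp add: mod_add_left_eq)
  finally show ?thesis .
qed

lemma vv_eq: assumes "odd n" shows "vv n (y + c) = (- 2 * uu n y - c) mod int n"
proof -
  have "(- 2 * uu n y - c) mod int n = (- (2 * uu n y) - c) mod int n" by simp
  also have "\<dots> = (- ((2 * uu n y) mod int n) - c) mod int n"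
    by (metis mod_diff_left_eq mod_minus_eq)
  also have "\<dots> = (- (y mod int n) - c) mod int n" using two_uu[OF assms] by simp
  also have "\<dots> = (- y - c) mod int n" by (metis mod_diff_left_eq mod_minus_eq)
  finally have "(- 2 * uu n y - c) mod int n = (- y - c) mod int n" .
  moreover have "- (y + c) = - y - c" by simp
  ultimately show ?thesis unfolding vv_def by simp
qed

lemma uu_inj: assumes "odd n" "0 \<le> i" "i < int n" "0 \<le> i'" "i' < int n"
  and "uu n (i + c) = uu n (i' + c)" shows "i = i'"
proof -
  have "(i + c) mod int n = (i' + c) mod int n" using two_uu[OF assms(1), of "i+c"] two_uu[OF assms(1), of "i'+c"] assms(6) by simp
  hence "((i + c) - c) mod int n = ((i' + c) - c) mod int n" by (rule mod_diff_cong) simp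
  hence "i mod int n = i' mod int n" by simp
  thus ?thesis using assms by simp
qed


lemma mod_shift: fixes y c N :: int assumes "0 \<le> y + c * N" "y + c * N < N" shows "y mod N = y + c * N"
proof -
  have "(y + c*N) mod N = y mod N" by simp
  moreover have "(y + c*N) mod N = y + c*N" by (rule mod_pos_pos_trivial) (use assms in auto)
  ultimately show ?thesis by simp
qed

context
  fixes N h x :: int
  assumes Nh: "N = 2*h+1" and h1: "1 \<le> h" and x0: "0 \<le> x" and xN: "x < N"
begin

lemma m1: "(x + 1) mod N = (if x < 2*h then x + 1 else 0)"
proof (cases "x < 2*h")
  case True thus ?thesis using mod_shift[of "x+1" 0 N] Nh x0 by simp
next
  case False thus ?thesis using mod_shift[of "x+1" "-1" N] Nh xN by simp
qed

lemma m2: "(-2*x - 2) mod N = (if x < h then N - 2*x - 2 else 2*N - 2*x - 2)"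
proof (cases "x < h")
  case True thus ?thesis using mod_shift[of "-2*x-2" 1 N] Nh x0 by simp
next
  case False thus ?thesis using mod_shift[of "-2*x-2" 2 N] Nh xN by simp
qed

lemma m3: "(-2*x - 3) mod N = (if x < h then N - 2*x - 3 else if x < 2*h then 2*N - 2*x - 3 else 3*N - 2*x - 3)"
proof -
  consider "x < h" | "h \<le> x" "x < 2*h" | "2*h \<le> x" by linarith
  thus ?thesis
  proof cases
    case 1 thus ?thesis using mod_shift[of "-2*x-3" 1 N] Nh x0 by simp
  next
    case 2 thus ?thesis using mod_shift[of "-2*x-3" 2 N] Nh x0 by simp
  next
    case 3 thus ?thesis using mod_shift[of "-2*x-3" 3 N] Nh xN h1 by simp
  qed
qed

lemma m4: "(-2*x - 1) mod N = (if x \<le> h then N - 2*x - 1 else 2*N - 2*x - 1)"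
proof (cases "x \<le> h")
  case True thus ?thesis using mod_shift[of "-2*x-1" 1 N] Nh x0 by simp
next
  case False thus ?thesis using mod_shift[of "-2*x-1" 2 N] Nh xN by simp
qed

end



definition EE :: "nat \<Rightarrow> nat \<Rightarrow> int \<Rightarrow> nat \<Rightarrow> int" where
"EE n k i t =
 (if t = 0 then int n * int k - 2 * int n + 1 - hv n + uu n i + vv n (i + 2)
  else if t = 1 then int n - uu n i + uu n (i + 2) - vv n (i + 2)
  else if t = 2 then (if 3 * int n - 1 - 2 * uu n (i + 2) \<le> 2 * int n
                      then int n * int k - 2 * int n + 3 * int n - 1 - 2 * uu n (i + 2)
                      else int n * int k - 2 * int n + 3 * int n - 1 - 2 * uu n (i + 2) - (2 * int n * int k + 1))
  else if t = 3 then - (int n + 1) + uu n (i + 2) - uu n (i + 4) - vv n (i + 5)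
  else if t = 4 then 3 * hv n + 3 + uu n (i + 4) + vv n (i + 5)
  else if (t - 5) mod 4 = 0 then 3 * int n + 4 * int n * int ((t - 5) div 4) + 1 + i mod int n
  else if (t - 5) mod 4 = 1 then - (3 * int n + 4 * int n * int ((t - 5) div 4) + int n + 1 + i mod int n)
  else if (t - 5) mod 4 = 2 then - (3 * int n + 4 * int n * int ((t - 5) div 4) + 2 * int n + 1 + (i + 2) mod int n)
  else 3 * int n + 4 * int n * int ((t - 5) div 4) + 3 * int n + 1 + (i + 2) mod int n)"

definition bb :: "nat \<Rightarrow> nat \<Rightarrow> nat" where
 "bb k t = (if t = 0 then k - 2 else if t = 1 then 0 else if t = 2 then k - 1 else if t = 3 then 1 else if t = 4 then 2 else t - 2)"

lemma EE_mod: "EE n k (i mod int n) t = EE n k i t"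
proof -
  have u: "uu n (i mod int n + c) = uu n (i + c)" for c
    by (metis mod_add_left_eq uu_mod)
  have v: "vv n (i mod int n + c) = vv n (i + c)" for c
    by (metis mod_add_left_eq vv_mod)
  have w: "(i mod int n + c) mod int n = (i + c) mod int n" for c
    by (simp add: mod_add_left_eq)
  have u0: "uu n (i mod int n) = uu n i" by (rule uu_mod)
  show ?thesis unfolding EE_def by (simp only: u v u0 w mod_mod_trivial)
qed

lemma sum_plus4: fixes f :: "nat \<Rightarrow> int" shows "(\<Sum>t<a + 4. f t) = (\<Sum>t<a. f t) + (\<Sum>s<4. f (a + s))"
proof -
  have "(\<Sum>t<a + 4. f t) = (\<Sum>t<a. f t) + (\<Sum>t\<in>{a..<a+4}. f t)"
    by (metis add.commute atLeast0LessThan le_add2 sum.atLeastLessThan_concat zero_le)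
  also have "(\<Sum>t\<in>{a..<a+4}. f t) = (\<Sum>s<4. f (a + s))"
  proof -
    have "(\<Sum>t\<in>{0 + a..<4 + a}. f t) = (\<Sum>s\<in>{0..<4}. f (s + a))" by (rule sum.shift_bounds_nat_ivl)
    thus ?thesis by (simp add: atLeast0LessThan add.commute)
  qed
  finally show ?thesis .
qed

lemma sum_split: fixes m :: nat and f :: "nat \<Rightarrow> int" shows "(\<Sum>t<5 + 4 * m. f t) = (\<Sum>t<5. f t) + (\<Sum>r<m. \<Sum>s<4. (f (5 + 4 * r + s) :: int))"
proof (induction m)
  case 0 thus ?case by simp
next
  case (Suc m)
  have e: "5 + 4 * Suc m = (5 + 4 * m) + 4" by simp
  show ?case unfolding e sum_plus4 Suc.IH by simp
qed

context
  fixes n k :: nat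
  assumes odd: "odd n" and n3: "3 \<le> n"
begin

private lemma h1: "1 \<le> hv n" using hv_eq[OF odd] n3 by linarith
private lemma Nh: "int n = 2 * hv n + 1" using hv_eq[OF odd] by simp
private lemma urange: "0 \<le> uu n y \<and> uu n y < int n" for y using uu_range n3 by simp

lemma diag0: "EE n k i 0 = int n * int k - 2 * int n +
   (if uu n i < hv n then hv n - uu n i else 3 * hv n + 1 - uu n i)"
proof -
  have "vv n (i + 2) = (- 2 * uu n i - 2) mod int n" by (rule vv_eq[OF odd])
  also have "\<dots> = (if uu n i < hv n then int n - 2 * uu n i - 2 else 2 * int n - 2 * uu n i - 2)"
    using m2[OF Nh h1, of "uu n i"] urange[of i] by simp
  finally show ?thesis unfolding EE_def using Nh by auto
qed

lemma diag1: "EE n k i 1 =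
   (if uu n i < hv n then 2 * uu n i + 3 else if uu n i < 2 * hv n then 2 * uu n i + 3 - int n else 1)"
proof -
  have a: "vv n (i + 2) = (if uu n i < hv n then int n - 2 * uu n i - 2 else 2 * int n - 2 * uu n i - 2)"
    using vv_eq[OF odd, of i 2] m2[OF Nh h1, of "uu n i"] urange[of i] by simp
  have b: "uu n (i + 2) = (if uu n i < 2 * hv n then uu n i + 1 else 0)"
    using uu_plus2[OF odd, of i] m1[OF Nh h1, of "uu n i"] urange[of i] by simp
  show ?thesis unfolding EE_def using a b Nh urange[of i] by auto
qed

lemma diag2: assumes k2: "2 \<le> k" shows "\<bar>EE n k i 2\<bar> = int n * int k - 2 * int n +
   (if hv n \<le> uu n (i + 2) then 3 * int n - 1 - 2 * uu n (i + 2) else int n + 2 + 2 * uu n (i + 2))"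
proof -
  have "int n * 2 \<le> int n * int k" using k2 by (intro mult_left_mono) auto
  hence P: "2 * int n \<le> int n * int k" by (simp add: mult.commute)
  have c: "(3 * int n - 1 - 2 * uu n (i + 2) \<le> 2 * int n) = (hv n \<le> uu n (i + 2))" using Nh by linarith
  have r: "0 \<le> uu n (i + 2)" "uu n (i + 2) < int n" using urange[of "i+2"] by auto
  have e: "EE n k i 2 = (if hv n \<le> uu n (i + 2)
                      then int n * int k - 2 * int n + 3 * int n - 1 - 2 * uu n (i + 2)
                      else int n * int k - 2 * int n + 3 * int n - 1 - 2 * uu n (i + 2) - (2 * (int n * int k) + 1))"
    unfolding EE_def by (simp add: c mult.assoc)
  have gen: "\<bar>(if hv n \<le> x then Q - 2 * int n + 3 * int n - 1 - 2 * x
                      else Q - 2 * int n + 3 * int n - 1 - 2 * x - (2 * Q + 1))\<bar>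
     = Q - 2 * int n + (if hv n \<le> x then 3 * int n - 1 - 2 * x else int n + 2 + 2 * x)"
    if "2 * int n \<le> Q" "0 \<le> x" "x < int n" for Q x
    using that by (auto simp: abs_if)
  show ?thesis unfolding e using gen[OF P r] .
qed

lemma diag3: "\<bar>EE n k i 3\<bar> =
   (if uu n (i + 2) < hv n then 2 * int n - 2 * uu n (i + 2) - 1
    else if uu n (i + 2) < 2 * hv n then 3 * int n - 2 * uu n (i + 2) - 1 else int n + 1)"
proof -
  have a: "vv n (i + 5) = (if uu n (i + 2) < hv n then int n - 2 * uu n (i + 2) - 3
       else if uu n (i + 2) < 2 * hv n then 2 * int n - 2 * uu n (i + 2) - 3 else 3 * int n - 2 * uu n (i + 2) - 3)"
    using vv_eq[OF odd, of "i + 2" 3] m3[OF Nh h1, of "uu n (i + 2)"] urange[of "i + 2"]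
    by (simp add: add.assoc)
  have b: "uu n (i + 4) = (if uu n (i + 2) < 2 * hv n then uu n (i + 2) + 1 else 0)"
    using uu_plus2[OF odd, of "i + 2"] m1[OF Nh h1, of "uu n (i + 2)"] urange[of "i + 2"]
    by (simp add: add.assoc)
  show ?thesis unfolding EE_def using a b Nh urange[of "i + 2"] by (auto simp: abs_if)
qed

lemma diag4: "EE n k i 4 =
   (if uu n (i + 4) \<le> hv n then 3 * hv n + 2 + int n - uu n (i + 4) else 3 * hv n + 2 + 2 * int n - uu n (i + 4))"
proof -
  have a: "vv n (i + 5) = (if uu n (i + 4) \<le> hv n then int n - 2 * uu n (i + 4) - 1 else 2 * int n - 2 * uu n (i + 4) - 1)"
    using vv_eq[OF odd, of "i + 4" 1] m4[OF Nh h1, of "uu n (i + 4)"] urange[of "i + 4"]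
    by (simp add: add.assoc)
  show ?thesis unfolding EE_def using a by auto
qed

lemma gadget: assumes "5 \<le> t" shows "\<bar>EE n k i t\<bar> = int n * (int t - 2) + 1 +
   (if (t - 5) mod 4 < 2 then i mod int n else (i + 2) mod int n)"
proof -
  obtain r s where ts: "t - 5 = 4 * r + s" "s < 4" by (metis div_mod_decomp mod_less_divisor mult.commute zero_less_numeral)
  have rs: "(t - 5) div 4 = r" "(t - 5) mod 4 = s" using ts by auto
  have t: "int t = 5 + 4 * int r + int s" using ts assms by linarith
  define R where "R = int n * int r"
  have R0: "0 \<le> R" unfolding R_def by simp
  have tt: "int n * (int t - 2) = 3 * int n + 4 * R + int s * int n" unfolding R_def t by (simp add: algebra_simps)
  have pos: "0 \<le> i mod int n" "0 \<le> (i + 2) mod int n" using n3 by auto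
  have n0: "0 < int n" using n3 by simp
  have e: "EE n k i t = (if s = 0 then 3 * int n + 4 * R + 1 + i mod int n
    else if s = 1 then - (3 * int n + 4 * R + int n + 1 + i mod int n)
    else if s = 2 then - (3 * int n + 4 * R + 2 * int n + 1 + (i + 2) mod int n)
    else 3 * int n + 4 * R + 3 * int n + 1 + (i + 2) mod int n)"
    unfolding EE_def R_def using assms rs by (simp add: mult.assoc)
  have "s = 0 \<or> s = 1 \<or> s = 2 \<or> s = 3" using ts by auto
  have p1: "0 \<le> i mod int n" and p2: "0 \<le> (i + 2) mod int n" using pos by auto
  from \<open>s = 0 \<or> s = 1 \<or> s = 2 \<or> s = 3\<close> show ?thesis unfolding e tt rs
    apply (elim disjE)
    apply (simp_all add: abs_if algebra_simps)
    using R0 p1 p2 n0 by linarith+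
qed

lemma blk: assumes k2: "2 \<le> k" shows "int n * int (bb k t) + 1 \<le> \<bar>EE n k i t\<bar> \<and> \<bar>EE n k i t\<bar> \<le> int n * int (bb k t) + int n"
proof -
  have "int n * 2 \<le> int n * int k" using k2 by (intro mult_left_mono) auto
  hence P: "2 * int n \<le> int n * int k" by (simp add: mult.commute)
  have K2: "int n * int (k - 2) = int n * int k - 2 * int n" using k2 by (simp add: of_nat_diff algebra_simps)
  have K1: "int n * int (k - 1) = int n * int k - 2 * int n + int n" using k2 by (simp add: of_nat_diff algebra_simps)
  consider "t = 0" | "t = 1" | "t = 2" | "t = 3" | "t = 4" | "5 \<le> t" by linarith
  thus ?thesis
  proof cases
    case 1
    have g: "\<bar>Q + g\<bar> = Q + g" "1 \<le> g" "g \<le> int n" if "0 \<le> Q" "g = (if x < hv n then hv n - x else 3 * hv n + 1 - x)" "0 \<le> x" "x < int n" for Q g x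
      using that Nh by auto
    show ?thesis using 1 diag0 g[of "int n * int k - 2 * int n" _ "uu n i"] urange[of i] P K2 unfolding bb_def by auto
  next
    case 2 thus ?thesis using diag1 urange[of i] Nh unfolding bb_def by auto
  next
    case 3 thus ?thesis using diag2[OF k2] urange[of "i+2"] Nh K1 unfolding bb_def by auto
  next
    case 4 thus ?thesis using diag3 urange[of "i+2"] Nh unfolding bb_def by auto
  next
    case 5 thus ?thesis using diag4 urange[of "i+4"] Nh unfolding bb_def by auto
  next
    case 6
    have b: "int (bb k t) = int t - 2" using 6 unfolding bb_def by auto
    obtain w where w: "\<bar>EE n k i t\<bar> = int n * (int t - 2) + 1 + w" "0 \<le> w" "w < int n"
      using gadget[OF 6, of i] n3 by (cases "(t - 5) mod 4 < 2") auto
    show ?thesis unfolding b using w by linarith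
  qed
qed

lemma injd: assumes "0 \<le> i" "i < int n" "0 \<le> j" "j < int n" and eq: "\<bar>EE n k i t\<bar> = \<bar>EE n k j t\<bar>" and k2: "2 \<le> k"
  shows "i = j"
proof -
  have rng: "0 \<le> uu n y" "uu n y < int n" for y using urange[of y] by auto
  consider "t = 0" | "t = 1" | "t = 2" | "t = 3" | "t = 4" | "5 \<le> t" by linarith
  thus ?thesis
  proof cases
    case 1
    have "int n * 2 \<le> int n * int k" using k2 by (intro mult_left_mono) auto
    hence P: "0 \<le> int n * int k - 2 * int n" by (simp add: mult.commute)
    have a: "\<bar>EE n k y 0\<bar> = int n * int k - 2 * int n + (if uu n y < hv n then hv n - uu n y else 3 * hv n + 1 - uu n y)" for y
      using diag0[of y] rng[of y] P Nh by auto
    have "uu n i = uu n j" using eq 1 a[of i] a[of j] rng[of i] rng[of j] Nh by (auto split: if_splits)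
    thus ?thesis using uu_inj[OF odd assms(1-4), of 0] by simp
  next
    case 2
    have "uu n i = uu n j" using eq 2 diag1[of i] diag1[of j] rng[of i] rng[of j] Nh by (auto split: if_splits) presburger+
    thus ?thesis using uu_inj[OF odd assms(1-4), of 0] by simp
  next
    case 3
    have "uu n (i+2) = uu n (j+2)" using eq 3 diag2[OF k2, of i] diag2[OF k2, of j] rng[of "i+2"] rng[of "j+2"] Nh by (auto split: if_splits) presburger+
    thus ?thesis using uu_inj[OF odd assms(1-4), of 2] by simp
  next
    case 4
    have "uu n (i+2) = uu n (j+2)" using eq 4 diag3[of i] diag3[of j] rng[of "i+2"] rng[of "j+2"] Nh by (auto split: if_splits) presburger+
    thus ?thesis using uu_inj[OF odd assms(1-4), of 2] by simp
  next
    case 5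
    have a: "\<bar>EE n k y 4\<bar> = EE n k y 4" for y using diag4[of y] rng[of "y+4"] Nh by auto
    have "uu n (i+4) = uu n (j+4)" using eq 5 a[of i] a[of j] diag4[of i] diag4[of j] rng[of "i+4"] rng[of "j+4"] Nh by (auto split: if_splits)
    thus ?thesis using uu_inj[OF odd assms(1-4), of 4] by simp
  next
    case 6
    have "(if (t - 5) mod 4 < 2 then i mod int n else (i + 2) mod int n) = (if (t - 5) mod 4 < 2 then j mod int n else (j + 2) mod int n)"
      using eq gadget[OF 6, of i] gadget[OF 6, of j] by simp
    hence "(i + 2) mod int n = (j + 2) mod int n \<or> i mod int n = j mod int n" by (auto split: if_splits)
    hence "i mod int n = j mod int n"
    proof
      assume "(i + 2) mod int n = (j + 2) mod int n"
      hence "((i + 2) - 2) mod int n = ((j + 2) - 2) mod int n" by (rule mod_diff_cong) simp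
      thus ?thesis by simp
    qed
    thus ?thesis using assms by simp
  qed
qed

lemma sum5: "(\<Sum>t<5. f t) = f 0 + f 1 + f 2 + f 3 + (f (4::nat) :: int)"
  by (simp add: numeral_eq_Suc)

lemma sum4: "(\<Sum>t<4. f t) = f 0 + f 1 + f 2 + (f (3::nat) :: int)"
  by (simp add: numeral_eq_Suc)

lemma G5_row: "(\<Sum>t<5. EE n k i t) = 2 * int n * int k + 1 -
   (if 3 * int n - 1 - 2 * uu n (i + 2) \<le> 2 * int n then 0 else 2 * int n * int k + 1)"
proof -
  have e0: "EE n k i 0 = int n * int k - 2 * int n + 1 - hv n + uu n i + vv n (i + 2)" by (simp add: EE_def)
  have e1: "EE n k i 1 = int n - uu n i + uu n (i + 2) - vv n (i + 2)" by (simp add: EE_def)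
  have e2: "EE n k i 2 = int n * int k - 2 * int n + 3 * int n - 1 - 2 * uu n (i + 2) - (if 3 * int n - 1 - 2 * uu n (i + 2) \<le> 2 * int n then 0 else 2 * int n * int k + 1)" by (simp add: EE_def)
  have e3: "EE n k i 3 = - (int n + 1) + uu n (i + 2) - uu n (i + 4) - vv n (i + 5)" by (simp add: EE_def)
  have e4: "EE n k i 4 = 3 * hv n + 3 + uu n (i + 4) + vv n (i + 5)" by (simp add: EE_def)
  show ?thesis unfolding sum5 e0 e1 e2 e3 e4 using Nh by simp
qed

lemma G5_col: "(\<Sum>t<5. EE n k (j - int t) t) = 2 * int n * int k + 1 -
   (if 3 * int n - 1 - 2 * uu n j \<le> 2 * int n then 0 else 2 * int n * int k + 1)"
proof -
  have c0: "EE n k (j - int 0) 0 = int n * int k - 2 * int n + 1 - hv n + uu n j + vv n (j + 2)" by (simp add: EE_def)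
  have a1: "j - int 1 + 2 = j + 1" "j - int 1 = j - 1" by simp_all
  have c1: "EE n k (j - int 1) 1 = int n - uu n (j - 1) + uu n (j + 1) - vv n (j + 1)" unfolding EE_def a1 by (simp add: ac_simps)
  have a2: "j - int 2 + 2 = j" by simp
  have c2: "EE n k (j - int 2) 2 = int n * int k - 2 * int n + 3 * int n - 1 - 2 * uu n j - (if 3 * int n - 1 - 2 * uu n j \<le> 2 * int n then 0 else 2 * int n * int k + 1)" unfolding EE_def a2 by simp
  have a3: "j - int 3 + 2 = j - 1" "j - int 3 + 4 = j + 1" "j - int 3 + 5 = j + 2" by simp_all
  have c3: "EE n k (j - int 3) 3 = - (int n + 1) + uu n (j - 1) - uu n (j + 1) - vv n (j + 2)" unfolding EE_def a3 by simp
  have a4: "j - int 4 + 4 = j" "j - int 4 + 5 = j + 1" by simp_all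
  have c4: "EE n k (j - int 4) 4 = 3 * hv n + 3 + uu n j + vv n (j + 1)" unfolding EE_def a4 by simp
  show ?thesis unfolding sum5 c0 c1 c2 c3 c4 using Nh by simp
qed

lemma gad_row: "(\<Sum>s<4. EE n k i (5 + 4 * r + s)) = 0"
proof -
  have d: "(5 + 4 * r + s - 5) div 4 = r" "(5 + 4 * r + s - 5) mod 4 = s" if "s < 4" for s using that by auto
  have g0: "EE n k i (5 + 4 * r + 0) = 3 * int n + 4 * int n * int r + 1 + i mod int n" unfolding EE_def using d[of 0] by simp
  have g1: "EE n k i (5 + 4 * r + 1) = - (3 * int n + 4 * int n * int r + int n + 1 + i mod int n)" unfolding EE_def using d[of 1] by simp
  have g2: "EE n k i (5 + 4 * r + 2) = - (3 * int n + 4 * int n * int r + 2 * int n + 1 + (i + 2) mod int n)" unfolding EE_def using d[of 2] by simp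
  have g3: "EE n k i (5 + 4 * r + 3) = 3 * int n + 4 * int n * int r + 3 * int n + 1 + (i + 2) mod int n" unfolding EE_def using d[of 3] by simp
  show ?thesis unfolding sum4 using g0 g1 g2 g3 by simp
qed

lemma gad_col: "(\<Sum>s<4. EE n k (j - int (5 + 4 * r + s)) (5 + 4 * r + s)) = 0"
proof -
  define X where "X = j - 5 - 4 * int r"
  have d: "(5 + 4 * r + s - 5) div 4 = r" "(5 + 4 * r + s - 5) mod 4 = s" if "s < 4" for s using that by auto
  have x0: "j - int (5 + 4 * r + 0) = X" unfolding X_def by simp
  have x1: "j - int (5 + 4 * r + 1) = X - 1" unfolding X_def by simp
  have x2: "j - int (5 + 4 * r + 2) + 2 = X" unfolding X_def by simp
  have x3: "j - int (5 + 4 * r + 3) + 2 = X - 1" unfolding X_def by simp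
  have g0: "EE n k (j - int (5 + 4 * r + 0)) (5 + 4 * r + 0) = 3 * int n + 4 * int n * int r + 1 + X mod int n"
    unfolding EE_def x0 using d[of 0] by simp
  have g1: "EE n k (j - int (5 + 4 * r + 1)) (5 + 4 * r + 1) = - (3 * int n + 4 * int n * int r + int n + 1 + (X - 1) mod int n)"
    unfolding EE_def x1 using d[of 1] by simp
  have g2: "EE n k (j - int (5 + 4 * r + 2)) (5 + 4 * r + 2) = - (3 * int n + 4 * int n * int r + 2 * int n + 1 + X mod int n)"
    unfolding EE_def x2 using d[of 2] by simp
  have g3: "EE n k (j - int (5 + 4 * r + 3)) (5 + 4 * r + 3) = 3 * int n + 4 * int n * int r + 3 * int n + 1 + (X - 1) mod int n"
    unfolding EE_def x3 using d[of 3] by simp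
  show ?thesis unfolding sum4 using g0 g1 g2 g3 by simp
qed

lemma row_total: assumes "k = 5 + 4 * m" shows "(\<Sum>t<k. EE n k i t) mod (2 * int n * int k + 1) = 0"
proof -
  have "(\<Sum>t<k. EE n k i t) = (\<Sum>t<5. EE n k i t) + (\<Sum>r<m. \<Sum>s<4. EE n k i (5 + 4 * r + s))"
    unfolding assms by (rule sum_split)
  also have "\<dots> = (\<Sum>t<5. EE n k i t)" using gad_row by simp
  finally show ?thesis using G5_row by simp
qed

lemma col_total: assumes "k = 5 + 4 * m" shows "(\<Sum>t<k. EE n k (j - int t) t) mod (2 * int n * int k + 1) = 0"
proof -
  have "(\<Sum>t<k. EE n k (j - int t) t) = (\<Sum>t<5. EE n k (j - int t) t) + (\<Sum>r<m. \<Sum>s<4. EE n k (j - int (5 + 4 * r + s)) (5 + 4 * r + s))"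
    unfolding assms by (rule sum_split)
  also have "\<dots> = (\<Sum>t<5. EE n k (j - int t) t)" using gad_col by simp
  finally show ?thesis using G5_col by simp
qed

end


lemma mod2: fixes a n :: nat assumes "a < 2 * n" shows "a mod n = (if a < n then a else a - n)"
proof (cases "a < n")
  case True thus ?thesis by simp
next
  case False
  hence "a mod n = (a - n) mod n" by (simp add: le_mod_geq)
  also have "\<dots> = a - n" using False assms by simp
  finally show ?thesis using False by simp
qed

lemma L1: fixes i t n :: nat assumes "i < n" "t < n" shows "((i + t) mod n + n - i) mod n = t"
proof (cases "i + t < n")
  case True
  hence "(i + t) mod n = i + t" by simp
  moreover have "(t + n) mod n = t" using assms by simp
  ultimately show ?thesis by (simp add: add.commute)
next
  case False
  hence "(i + t) mod n = i + t - n" using mod2[of "i+t" n] assms by simp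
  thus ?thesis using False assms by simp
qed

lemma L2: fixes i j n :: nat assumes "i < n" "j < n" shows "(i + (j + n - i) mod n) mod n = j"
proof (cases "j < i")
  case True
  hence "(j + n - i) mod n = j + n - i" using assms by simp
  moreover have "i + (j + n - i) = j + n" using True assms by simp
  moreover have "(j + n) mod n = j" using assms by simp
  ultimately show ?thesis by simp
next
  case False
  hence "(j + n - i) mod n = j - i" using mod2[of "j + n - i" n] assms by auto
  thus ?thesis using False assms by simp
qed

lemma L3: fixes j t n :: nat assumes "j < n" "t < n" shows "(j + n - (j + n - t) mod n) mod n = t"
proof (cases "j < t")
  case True
  hence "(j + n - t) mod n = j + n - t" using assms by simp
  thus ?thesis using True assms by simp
next
  case False
  hence "(j + n - t) mod n = j - t" using mod2[of "j + n - t" n] assms by auto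
  hence "j + n - (j + n - t) mod n = t + n" using False assms by simp
  thus ?thesis using assms by simp
qed

definition AA :: "nat \<Rightarrow> nat \<Rightarrow> nat \<Rightarrow> nat \<Rightarrow> int option" where
  "AA n k i j = (if (j + n - i) mod n < k then Some (EE n k (int i) ((j + n - i) mod n)) else None)"

lemma frow: assumes "i < n" "k \<le> n" shows "filled_row (AA n k) n i = (\<lambda>t. (i + t) mod n) ` {..<k}"
proof
  show "filled_row (AA n k) n i \<subseteq> (\<lambda>t. (i + t) mod n) ` {..<k}"
  proof
    fix j assume "j \<in> filled_row (AA n k) n i"
    hence j: "j < n" "(j + n - i) mod n < k" unfolding filled_row_def AA_def by (auto split: if_splits)
    hence "j = (i + (j + n - i) mod n) mod n" using L2[OF assms(1) j(1)] by simp
    thus "j \<in> (\<lambda>t. (i + t) mod n) ` {..<k}" using j by blast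
  qed
next
  show "(\<lambda>t. (i + t) mod n) ` {..<k} \<subseteq> filled_row (AA n k) n i"
  proof
    fix j assume "j \<in> (\<lambda>t. (i + t) mod n) ` {..<k}"
    then obtain t where t: "t < k" "j = (i + t) mod n" by auto
    have "(j + n - i) mod n = t" using L1[OF assms(1), of t] t assms by simp
    thus "j \<in> filled_row (AA n k) n i" unfolding filled_row_def AA_def using t assms by auto
  qed
qed

lemma fcol: assumes "j < n" "k \<le> n" shows "filled_col (AA n k) n j = (\<lambda>t. (j + n - t) mod n) ` {..<k}"
proof
  show "filled_col (AA n k) n j \<subseteq> (\<lambda>t. (j + n - t) mod n) ` {..<k}"
  proof
    fix i assume "i \<in> filled_col (AA n k) n j"
    hence i: "i < n" "(j + n - i) mod n < k" unfolding filled_col_def AA_def by (auto split: if_splits)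
    hence "i = (j + n - (j + n - i) mod n) mod n" using L3[OF assms(1) i(1)] by simp
    thus "i \<in> (\<lambda>t. (j + n - t) mod n) ` {..<k}" using i by blast
  qed
next
  show "(\<lambda>t. (j + n - t) mod n) ` {..<k} \<subseteq> filled_col (AA n k) n j"
  proof
    fix i assume "i \<in> (\<lambda>t. (j + n - t) mod n) ` {..<k}"
    then obtain t where t: "t < k" "i = (j + n - t) mod n" by auto
    have "(j + n - i) mod n = t" using L3[OF assms(1), of t] t assms by simp
    thus "i \<in> filled_col (AA n k) n j" unfolding filled_col_def AA_def using t assms by auto
  qed
qed

lemma inj_row: fixes i n k :: nat assumes "i < n" "k \<le> n" shows "inj_on (\<lambda>t. (i + t) mod n) {..<k}"
proof (rule inj_onI)
  fix t t' assume t: "t \<in> {..<k}" "t' \<in> {..<k}" and e: "(i + t) mod n = (i + t') mod n"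
  have "t = ((i + t) mod n + n - i) mod n" using L1[OF assms(1), of t] t assms by simp
  also have "\<dots> = ((i + t') mod n + n - i) mod n" by (simp only: e)
  also have "\<dots> = t'" using L1[OF assms(1), of t'] t assms by simp
  finally show "t = t'" .
qed

lemma inj_col: fixes j n k :: nat assumes "j < n" "k \<le> n" shows "inj_on (\<lambda>t. (j + n - t) mod n) {..<k}"
proof (rule inj_onI)
  fix t t' assume t: "t \<in> {..<k}" "t' \<in> {..<k}" and e: "(j + n - t) mod n = (j + n - t') mod n"
  have "t = (j + n - (j + n - t) mod n) mod n" using L3[OF assms(1), of t] t assms by simp
  also have "\<dots> = (j + n - (j + n - t') mod n) mod n" by (simp only: e)
  also have "\<dots> = t'" using L3[OF assms(1), of t'] t assms by simp
  finally show "t = t'" .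
qed




lemma blk_eq: fixes N v :: int and b b' :: nat
  assumes "0 < N" "N * int b + 1 \<le> v" "v \<le> N * int b + N" "N * int b' + 1 \<le> v" "v \<le> N * int b' + N"
  shows "b = b'"
proof (rule ccontr)
  assume "b \<noteq> b'"
  hence "b < b' \<or> b' < b" by auto
  thus False
  proof
    assume "b < b'"
    hence "N * (int b + 1) \<le> N * int b'" using assms(1) by (intro mult_left_mono) auto
    thus False using assms by (simp add: algebra_simps)
  next
    assume "b' < b"
    hence "N * (int b' + 1) \<le> N * int b" using assms(1) by (intro mult_left_mono) auto
    thus False using assms by (simp add: algebra_simps)
  qed
qed

definition cc :: "nat \<Rightarrow> nat \<Rightarrow> nat" where
 "cc k b = (if b = k - 2 then 0 else if b = 0 then 1 else if b = k - 1 then 2 else if b = 1 then 3 else if b = 2 then 4 else b + 2)"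
lemma cc_bb: assumes "t < k" "5 \<le> k" shows "cc k (bb k t) = t"
proof -
  have ne: "(1::nat) \<noteq> k - 2" "(1::nat) \<noteq> k - 1" "(2::nat) \<noteq> k - 2" "(2::nat) \<noteq> k - 1"
    "(0::nat) \<noteq> k - 2" "k - 1 \<noteq> k - 2" "(0::nat) \<noteq> k - 1" using assms by linarith+
  consider "t = 0" | "t = 1" | "t = 2" | "t = 3" | "t = 4" | "5 \<le> t" by linarith
  thus ?thesis
  proof cases
    case 1 thus ?thesis unfolding bb_def cc_def by simp
  next
    case 2 thus ?thesis unfolding bb_def cc_def using assms ne by simp
  next
    case 3 thus ?thesis unfolding bb_def cc_def using assms ne by simp
  next
    case 4 thus ?thesis unfolding bb_def cc_def using assms ne by simp
  next
    case 5 thus ?thesis unfolding bb_def cc_def using assms ne by simp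
  next
    case 6
    have b: "bb k t = t - 2" using 6 unfolding bb_def by simp
    have "t - 2 \<noteq> k - 2" "t - 2 \<noteq> 0" "t - 2 \<noteq> k - 1" "t - 2 \<noteq> 1" "t - 2 \<noteq> 2" using 6 assms by linarith+
    thus ?thesis unfolding b cc_def using 6 by simp
  qed
qed
lemma bb_inj: "t < k \<Longrightarrow> t' < k \<Longrightarrow> 5 \<le> k \<Longrightarrow> bb k t = bb k t' \<Longrightarrow> t = t'"
  by (metis cc_bb)

lemma bb_bound: "t < k \<Longrightarrow> 5 \<le> k \<Longrightarrow> bb k t + 1 \<le> k"
  unfolding bb_def by auto

definition phi :: "nat \<Rightarrow> nat \<Rightarrow> nat \<times> nat \<Rightarrow> int" where "phi n k p = \<bar>EE n k (int (fst p)) (snd p)\<bar>"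

context
  fixes n k :: nat
  assumes odd: "odd n" and n3: "3 \<le> n" and k5: "5 \<le> k" and kn: "k < n"
begin

lemma row_sum_eq: assumes "i < n"
  shows "(\<Sum>j\<in>filled_row (AA n k) n i. the (AA n k i j)) = (\<Sum>t<k. EE n k (int i) t)"
proof -
  have "(\<Sum>j\<in>filled_row (AA n k) n i. the (AA n k i j)) = (\<Sum>t<k. the (AA n k i ((i + t) mod n)))"
  proof -
    have fr: "filled_row (AA n k) n i = (\<lambda>t. (i + t) mod n) ` {..<k}" using frow[of i n k] assms kn by simp
    have inj: "inj_on (\<lambda>t. (i + t) mod n) {..<k}" using inj_row[of i n k] assms kn by simp
    show ?thesis unfolding fr by (simp add: sum.reindex[OF inj] o_def)
  qed
  also have "\<dots> = (\<Sum>t<k. EE n k (int i) t)"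
  proof (rule sum.cong)
    fix t assume "t \<in> {..<k}"
    hence t: "t < k" by simp
    have "((i + t) mod n + n - i) mod n = t" using L1[OF assms, of t] t kn by simp
    thus "the (AA n k i ((i + t) mod n)) = EE n k (int i) t" unfolding AA_def using t by simp
  qed simp
  finally show ?thesis .
qed

lemma col_sum_eq: assumes "j < n"
  shows "(\<Sum>i\<in>filled_col (AA n k) n j. the (AA n k i j)) = (\<Sum>t<k. EE n k (int j - int t) t)"
proof -
  have "(\<Sum>i\<in>filled_col (AA n k) n j. the (AA n k i j)) = (\<Sum>t<k. the (AA n k ((j + n - t) mod n) j))"
  proof -
    have fc: "filled_col (AA n k) n j = (\<lambda>t. (j + n - t) mod n) ` {..<k}" using fcol[of j n k] assms kn by simp
    have inj: "inj_on (\<lambda>t. (j + n - t) mod n) {..<k}" using inj_col[of j n k] assms kn by simp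
    show ?thesis unfolding fc by (simp add: sum.reindex[OF inj] o_def)
  qed
  also have "\<dots> = (\<Sum>t<k. EE n k (int j - int t) t)"
  proof (rule sum.cong)
    fix t assume "t \<in> {..<k}"
    hence t: "t < k" by simp
    have e: "(j + n - (j + n - t) mod n) mod n = t" using L3[OF assms, of t] t kn by simp
    have "int ((j + n - t) mod n) = int (j + n - t) mod int n" by (simp add: of_nat_mod)
    also have "int (j + n - t) = (int j - int t) + int n" using t kn by simp
    also have "((int j - int t) + int n) mod int n = (int j - int t) mod int n" by simp
    finally have i: "int ((j + n - t) mod n) = (int j - int t) mod int n" .
    show "the (AA n k ((j + n - t) mod n) j) = EE n k (int j - int t) t" unfolding AA_def using t e i EE_mod by simp
  qed simp
  finally show ?thesis .
qed


lemma phi_range: assumes "i < n" "t < k" shows "1 \<le> phi n k (i, t) \<and> phi n k (i, t) \<le> int (n * k)"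
proof -
  have b: "int n * int (bb k t) + 1 \<le> phi n k (i,t) \<and> phi n k (i,t) \<le> int n * int (bb k t) + int n"
    unfolding phi_def using blk[OF odd n3, where k=k and i="int i" and t=t] k5 by simp
  have "bb k t + 1 \<le> k" using bb_bound assms k5 by simp
  hence A: "int n * (int (bb k t) + 1) \<le> int n * int k" by (intro mult_left_mono) auto
  have B: "0 \<le> int n * int (bb k t)" by simp
  have C: "int n * (int (bb k t) + 1) = int n * int (bb k t) + int n" by (simp add: algebra_simps)
  have D: "int (n * k) = int n * int k" by simp
  show ?thesis using b A B C D by linarith
qed

lemma phi_inj: "inj_on (phi n k) ({..<n} \<times> {..<k})"
proof (rule inj_onI)
  fix p q assume p: "p \<in> {..<n} \<times> {..<k}" and q: "q \<in> {..<n} \<times> {..<k}" and e: "phi n k p = phi n k q"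
  obtain i t where pi: "p = (i, t)" "i < n" "t < k" using p by auto
  obtain i' t' where qi: "q = (i', t')" "i' < n" "t' < k" using q by auto
  have b1: "int n * int (bb k t) + 1 \<le> phi n k p \<and> phi n k p \<le> int n * int (bb k t) + int n"
    unfolding phi_def pi using blk[OF odd n3, where k=k and i="int i" and t=t] k5 by simp
  have b2: "int n * int (bb k t') + 1 \<le> phi n k q \<and> phi n k q \<le> int n * int (bb k t') + int n"
    unfolding phi_def qi using blk[OF odd n3, where k=k and i="int i'" and t=t'] k5 by simp
  have "bb k t = bb k t'" using blk_eq[of "int n" "bb k t" "phi n k p" "bb k t'"] b1 b2 n3 e by auto
  hence tt: "t = t'" using bb_inj pi qi k5 by blast
  have "\<bar>EE n k (int i) t\<bar> = \<bar>EE n k (int i') t\<bar>" using e unfolding pi qi tt phi_def by simp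
  hence "int i = int i'" using injd[OF odd n3, where i="int i" and j="int i'" and k=k and t=t] pi qi k5 by simp
  thus "p = q" using pi qi tt by simp
qed

lemma phi_image: "phi n k ` ({..<n} \<times> {..<k}) = {1..int (n * k)}"
proof (rule card_subset_eq)
  show "finite {1..int (n * k)}" by simp
  show "phi n k ` ({..<n} \<times> {..<k}) \<subseteq> {1..int (n * k)}" using phi_range by auto
  have "card (phi n k ` ({..<n} \<times> {..<k})) = card ({..<n} \<times> {..<k})" by (rule card_image[OF phi_inj])
  also have "\<dots> = n * k" by (simp add: card_cartesian_product)
  also have "n * k = card {1..int (n * k)}" by (simp add: nat_mult_distrib)
  finally show "card (phi n k ` ({..<n} \<times> {..<k})) = card {1..int (n * k)}" .
qed

end



lemma phi_eq: "phi n k (i, t) = \<bar>EE n k (int i) t\<bar>" unfolding phi_def by simp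

theorem theorem6p2:
  fixes n k :: nat
  assumes "n mod 4 = 1" and "k mod 4 = 1" and "5 \<le> k" and "k < n"
  shows "\<exists>A. heffter n k A"
proof -
  have odd: "odd n" using assms(1) by presburger
  have n3: "3 \<le> n" using assms by linarith
  have k5: "5 \<le> k" and kn: "k < n" using assms by auto
  have "k = 5 + 4 * ((k - 5) div 4)" using assms(2,3) by presburger
  then obtain m where km: "k = 5 + 4 * m" by blast
  define A where "A = AA n k"
  have cell: "\<exists>t<k. (j + n - i) mod n = t \<and> v = EE n k (int i) t" if "A i j = Some v" for i j v
    using that unfolding A_def AA_def by (auto split: if_splits)
  have vb: "1 \<le> \<bar>v\<bar> \<and> \<bar>v\<bar> \<le> int (n * k)" if iv: "i < n" and av: "A i j = Some v" for i j v
  proof -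
    obtain t where t: "t < k" "v = EE n k (int i) t" using cell[OF av] by blast
    show ?thesis using phi_range[OF odd n3 k5 kn iv t(1)] t by (simp add: phi_eq)
  qed
  have G1: "\<forall>i<n. \<forall>j<n. A i j \<noteq> Some 0"
  proof (intro allI impI notI)
    fix i j assume "i < n" "j < n" "A i j = Some 0"
    thus False using vb[of i j 0] by simp
  qed
  have G2: "\<forall>i<n. card (filled_row A n i) = k"
  proof (intro allI impI)
    fix i assume i: "i < n"
    have "filled_row A n i = (\<lambda>t. (i + t) mod n) ` {..<k}" unfolding A_def using frow[of i n k] i kn by simp
    moreover have "inj_on (\<lambda>t. (i + t) mod n) {..<k}" using inj_row[of i n k] i kn by simp
    ultimately show "card (filled_row A n i) = k" by (simp add: card_image)
  qed
  have G3: "\<forall>j<n. card (filled_col A n j) = k"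
  proof (intro allI impI)
    fix j assume j: "j < n"
    have "filled_col A n j = (\<lambda>t. (j + n - t) mod n) ` {..<k}" unfolding A_def using fcol[of j n k] j kn by simp
    moreover have "inj_on (\<lambda>t. (j + n - t) mod n) {..<k}" using inj_col[of j n k] j kn by simp
    ultimately show "card (filled_col A n j) = k" by (simp add: card_image)
  qed
  have G4: "\<forall>i<n. (\<Sum>j\<in>filled_row A n i. the (A i j)) mod (2 * int n * int k + 1) = 0"
    unfolding A_def using row_sum_eq[OF odd n3 k5 kn] row_total[OF odd n3 km] by simp
  have G5: "\<forall>j<n. (\<Sum>i\<in>filled_col A n j. the (A i j)) mod (2 * int n * int k + 1) = 0"
    unfolding A_def using col_sum_eq[OF odd n3 k5 kn] col_total[OF odd n3 km] by simp
  have G6: "\<forall>i<n. \<forall>j<n. \<forall>v. A i j = Some v \<longrightarrow> 1 \<le> \<bar>v\<bar> \<and> \<bar>v\<bar> \<le> int (n * k)" using vb by blast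
  have G7: "\<exists>!p. p \<in> {0..<n} \<times> {0..<n} \<and> (A (fst p) (snd p) = Some x \<or> A (fst p) (snd p) = Some (-x))"
    if x1: "1 \<le> x" and x2: "x \<le> int (n * k)" for x
  proof -
    have "x \<in> phi n k ` ({..<n} \<times> {..<k})" using phi_image[OF odd n3 k5 kn] x1 x2 by simp
    then obtain i t where it: "i < n" "t < k" "phi n k (i, t) = x" by auto
    define p0 where "p0 = (i, (i + t) mod n)"
    have tt: "((i + t) mod n + n - i) mod n = t" using L1[OF it(1), of t] it kn by simp
    have Ap0: "A i ((i + t) mod n) = Some (EE n k (int i) t)" unfolding A_def AA_def using tt it by simp
    have ex: "p0 \<in> {0..<n} \<times> {0..<n} \<and> (A (fst p0) (snd p0) = Some x \<or> A (fst p0) (snd p0) = Some (-x))"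
      using Ap0 it n3 unfolding p0_def by (auto simp: abs_if phi_eq)
    have un: "p = p0" if pp: "p \<in> {0..<n} \<times> {0..<n} \<and> (A (fst p) (snd p) = Some x \<or> A (fst p) (snd p) = Some (-x))" for p
    proof -
      obtain a b where p: "p = (a, b)" "a < n" "b < n" using pp by auto
      obtain v where v: "A a b = Some v" "\<bar>v\<bar> = x" using pp p x1 by auto
      obtain t' where t': "t' < k" "(b + n - a) mod n = t'" "v = EE n k (int a) t'" using cell[OF v(1)] by blast
      have "phi n k (a, t') = phi n k (i, t)" using v t' it by (simp add: phi_eq)
      hence "(a, t') = (i, t)" using phi_inj[OF odd n3 k5 kn] p it t' unfolding inj_on_def by blast
      moreover have "b = (a + t') mod n" using L2[OF p(2) p(3)] t' by simp
      ultimately show ?thesis unfolding p0_def p by simp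
    qed
    show ?thesis using ex un by blast
  qed
  have "heffter n k A" unfolding heffter_def
  proof (intro conjI)
    show "\<forall>x::int. 1 \<le> x \<and> x \<le> int (n * k) \<longrightarrow>
        (\<exists>!p. p \<in> {0..<n} \<times> {0..<n} \<and> (A (fst p) (snd p) = Some x \<or> A (fst p) (snd p) = Some (- x)))"
    proof (intro allI impI)
      fix x :: int assume "1 \<le> x \<and> x \<le> int (n * k)"
      thus "\<exists>!p. p \<in> {0..<n} \<times> {0..<n} \<and> (A (fst p) (snd p) = Some x \<or> A (fst p) (snd p) = Some (- x))"
        using G7 by blast
    qed
  qed (rule G1 G2 G3 G4 G5 G6)+
  thus ?thesis by blast
qed

end
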